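(* Let $(X,d,\mathfrak{m},p)$ be a pointed metric measure space, and assume that for each $R>r>0$ there is $C(R,r)>0$ such that $\mathfrak{m}(B_x(R,X))\leq C(R,r)\cdot\mathfrak{m}(B_x(r,X))$ for every $x\in X$. Then for each $[a,b]\subset(0,\infty)$, any discrete group $\Gamma\leq\mathrm{Iso}(X)$ and any short basis $\beta\subset\Gamma$ with respect to $p$, there are at most $C(3b,a/2)$ elements of $\beta$ with norm $\|\cdot\|_p$ in $[a,b]$.
   Context: For $g\in\Gamma$, $\|g\|_p:=d(gp,p)$. A short basis of $\Gamma$ with respect to $p$ is a countable collection $\{\gamma_1,\gamma_2,\dots\}\subset\Gamma$ such that each $\gamma_{j+1}$ is an element of minimal norm in $\Gamma\setminus\langle\gamma_1,\dots,\gamma_j\rangle$. *)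

theory Defs
  imports "HOL-Analysis.Analysis"
begin

definition isometry :: "('a::metric_space \<Rightarrow> 'a) \<Rightarrow> bool" where
  "isometry g \<longleftrightarrow> (\<forall>x y. dist (g x) (g y) = dist x y) \<and> surj g"

definition iso_subgroup :: "('a::metric_space \<Rightarrow> 'a) set \<Rightarrow> bool" where
  "iso_subgroup G \<longleftrightarrow> (\<forall>g\<in>G. isometry g) \<and> id \<in> G \<and>
     (\<forall>g\<in>G. \<forall>h\<in>G. g \<circ> h \<in> G) \<and> (\<forall>g\<in>G. inv g \<in> G)"

definition gen_subgroup :: "('a::metric_space \<Rightarrow> 'a) set \<Rightarrow> ('a \<Rightarrow> 'a) set" where
  "gen_subgroup S = \<Inter>{H. iso_subgroup H \<and> S \<subseteq> H}"

text \<open>Discreteness of a subgroup of Iso(X) in the compact-open topology: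
  every element has a basic compact-open neighbourhood
  {h. sup over K of dist (h x) (g x) < e} containing no other element.\<close>
definition discrete_iso_subgroup :: "('a::metric_space \<Rightarrow> 'a) set \<Rightarrow> bool" where
  "discrete_iso_subgroup G \<longleftrightarrow> iso_subgroup G \<and>
     (\<forall>g\<in>G. \<exists>K e. compact K \<and> e > 0 \<and>
        (\<forall>h\<in>G. (\<forall>x\<in>K. dist (h x) (g x) < e) \<longrightarrow> h = g))"

definition iso_norm :: "'a::metric_space \<Rightarrow> ('a \<Rightarrow> 'a) \<Rightarrow> real" where
  "iso_norm p g = dist (g p) p"

text \<open>Short basis: a sequence gamma indexed by I, where I = {..<n} (finite collection)
  or I = UNIV (infinite collection); index j here corresponds to gamma_(j+1) in the paper.\<close>
definition short_basis ::
  "('a::metric_space \<Rightarrow> 'a) set \<Rightarrow> 'a \<Rightarrow> (nat \<Rightarrow> ('a \<Rightarrow> 'a)) \<Rightarrow> nat set \<Rightarrow> bool" where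
  "short_basis G p \<gamma> I \<longleftrightarrow>
     (I = UNIV \<or> (\<exists>n. I = {..<n})) \<and>
     (\<forall>j\<in>I. \<gamma> j \<in> G - gen_subgroup (\<gamma> ` {..<j}) \<and>
        (\<forall>h\<in>G - gen_subgroup (\<gamma> ` {..<j}). iso_norm p (\<gamma> j) \<le> iso_norm p h))"

definition mm_space :: "'a::polish_space measure \<Rightarrow> bool" where
  "mm_space M \<longleftrightarrow> sets M = sets borel \<and>
     (\<forall>x r. emeasure M (ball x r) < \<infinity>) \<and>
     (\<forall>x r. r > 0 \<longrightarrow> emeasure M (ball x r) > 0)"

end

theory Submission
  imports Defs
begin

lemma sep_lemma:
  assumes discr: "discrete_iso_subgroup \<Gamma>"
    and sb: "short_basis \<Gamma> p \<gamma> I"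
    and ij: "i \<in> I" "j \<in> I" "i < j"
  shows "iso_norm p (\<gamma> j) \<le> dist (\<gamma> i p) (\<gamma> j p)"
proof -
  have G: "iso_subgroup \<Gamma>" using discr by (simp add: discrete_iso_subgroup_def)
  have gi: "\<gamma> i \<in> \<Gamma>" using sb ij by (auto simp: short_basis_def)
  have gj: "\<gamma> j \<in> \<Gamma> - gen_subgroup (\<gamma> ` {..<j})" using sb ij by (auto simp: short_basis_def)
  have minj: "\<And>h. h \<in> \<Gamma> - gen_subgroup (\<gamma> ` {..<j}) \<Longrightarrow> iso_norm p (\<gamma> j) \<le> iso_norm p h"
    using sb ij by (auto simp: short_basis_def)
  have isoi: "isometry (\<gamma> i)" using G gi by (auto simp: iso_subgroup_def)
  hence dis: "\<And>x y. dist (\<gamma> i x) (\<gamma> i y) = dist x y" and su: "surj (\<gamma> i)"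
    by (auto simp: isometry_def)
  define h where "h = inv (\<gamma> i) \<circ> \<gamma> j"
  have hG: "h \<in> \<Gamma>" using G gi gj unfolding h_def iso_subgroup_def by blast
  have comp: "\<gamma> i \<circ> h = \<gamma> j" unfolding h_def using su
    by (auto simp: surj_f_inv_f)
  have "h \<notin> gen_subgroup (\<gamma> ` {..<j})"
  proof
    assume hin: "h \<in> gen_subgroup (\<gamma> ` {..<j})"
    have "\<gamma> i \<circ> h \<in> gen_subgroup (\<gamma> ` {..<j})"
      unfolding gen_subgroup_def
    proof (rule InterI)
      fix H assume "H \<in> {H. iso_subgroup H \<and> \<gamma> ` {..<j} \<subseteq> H}"
      hence H: "iso_subgroup H" "\<gamma> ` {..<j} \<subseteq> H" by auto
      have "h \<in> H" using hin H unfolding gen_subgroup_def by blast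
      moreover have "\<gamma> i \<in> H" using H(2) ij by auto
      ultimately show "\<gamma> i \<circ> h \<in> H" using H(1) unfolding iso_subgroup_def by blast
    qed
    with comp gj show False by simp
  qed
  with hG have "iso_norm p (\<gamma> j) \<le> iso_norm p h" using minj by blast
  also have "iso_norm p h = dist (\<gamma> i (inv (\<gamma> i) (\<gamma> j p))) (\<gamma> i p)"
    unfolding iso_norm_def h_def by (simp add: dis)
  also have "\<dots> = dist (\<gamma> i p) (\<gamma> j p)" using su by (simp add: surj_f_inv_f dist_commute)
  finally show ?thesis .
qed

theorem mainTheorem12:
  fixes M :: "'a::polish_space measure" and p :: 'a
    and C :: "real \<Rightarrow> real \<Rightarrow> real"
    and \<Gamma> :: "('a \<Rightarrow> 'a) set" and \<gamma> :: "nat \<Rightarrow> ('a \<Rightarrow> 'a)" and I :: "nat set"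
    and a b :: real
  assumes mms: "mm_space M"
    and Cpos: "\<And>R r. R > r \<Longrightarrow> r > 0 \<Longrightarrow> C R r > 0"
    and doubling: "\<And>R r x. R > r \<Longrightarrow> r > 0 \<Longrightarrow>
        emeasure M (ball x R) \<le> ennreal (C R r) * emeasure M (ball x r)"
    and ab: "0 < a" "a \<le> b"
    and discr: "discrete_iso_subgroup \<Gamma>"
    and sb: "short_basis \<Gamma> p \<gamma> I"
  shows "finite {g \<in> \<gamma> ` I. a \<le> iso_norm p g \<and> iso_norm p g \<le> b} \<and>
         real (card {g \<in> \<gamma> ` I. a \<le> iso_norm p g \<and> iso_norm p g \<le> b}) \<le> C (3 * b) (a / 2)"
proof -
  define S where "S = {g \<in> \<gamma> ` I. a \<le> iso_norm p g \<and> iso_norm p g \<le> b}"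
  have C0: "C (3 * b) (a / 2) > 0" using Cpos ab by simp
  have far: "a \<le> dist (g p) (g' p)" if gS: "g \<in> S" "g' \<in> S" "g \<noteq> g'" for g g'
  proof -
    obtain i j where i: "i \<in> I" "g = \<gamma> i" and j: "j \<in> I" "g' = \<gamma> j"
    proof -
      have "g \<in> \<gamma> ` I" "g' \<in> \<gamma> ` I" using gS(1,2) unfolding S_def by auto
      thus ?thesis using that by blast
    qed
    have "i \<noteq> j" using that i j by auto
    then consider "i < j" | "j < i" by linarith
    then show ?thesis
    proof cases
      case 1
      have "iso_norm p (\<gamma> j) \<le> dist (\<gamma> i p) (\<gamma> j p)"
        using sep_lemma[OF discr sb i(1) j(1) 1] .
      moreover have "a \<le> iso_norm p (\<gamma> j)" using that j unfolding S_def by auto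
      ultimately show ?thesis using i j by simp
    next
      case 2
      have "iso_norm p (\<gamma> i) \<le> dist (\<gamma> j p) (\<gamma> i p)"
        using sep_lemma[OF discr sb j(1) i(1) 2] .
      moreover have "a \<le> iso_norm p (\<gamma> i)" using that i unfolding S_def by auto
      ultimately show ?thesis using i j by (simp add: dist_commute)
    qed
  qed
  have nb: "dist (g p) p \<le> b" if "g \<in> S" for g using that unfolding S_def iso_norm_def by auto
  have sets: "\<And>x r. ball x r \<in> sets M" using mms by (simp add: mm_space_def)
  have bnd: "real (card F) \<le> C (3 * b) (a / 2)" if F: "F \<subseteq> S" "finite F" for F
  proof (cases "F = {}")
    case True thus ?thesis using C0 by simp
  next
    case False
    define f where "f g = emeasure M (ball (g p) (a/2))" for g
    define m0 where "m0 = Min (f ` F)"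
    obtain g0 where g0: "g0 \<in> F" "f g0 = m0" unfolding m0_def
    proof -
      have "Min (f ` F) \<in> f ` F" using Min_in[of "f ` F"] F False by blast
      thus ?thesis using that unfolding m0_def by (metis imageE)
    qed
    have m0le: "m0 \<le> f g" if "g \<in> F" for g unfolding m0_def using F that by auto
    have m0pos: "m0 > 0" using g0 mms ab unfolding f_def mm_space_def by auto
    have m0fin: "m0 < \<infinity>" using g0 mms unfolding f_def mm_space_def by auto
    have disj: "disjoint_family_on (\<lambda>g. ball (g p) (a/2)) F"
      unfolding disjoint_family_on_def
    proof (intro ballI impI)
      fix g g' assume gg: "g \<in> F" "g' \<in> F" "g \<noteq> g'"
      have "a \<le> dist (g p) (g' p)" using far gg F by auto
      thus "ball (g p) (a / 2) \<inter> ball (g' p) (a / 2) = {}"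
        by (auto simp: ball_def) (smt (verit) dist_triangle2)
    qed
    have "of_nat (card F) * m0 = (\<Sum>g\<in>F. m0)" by simp
    also have "\<dots> \<le> (\<Sum>g\<in>F. f g)" by (rule sum_mono) (rule m0le)
    also have "\<dots> = emeasure M (\<Union>g\<in>F. ball (g p) (a/2))"
      unfolding f_def using sum_emeasure[of "\<lambda>g. ball (g p) (a/2)" F M] sets disj F by auto
    also have "\<dots> \<le> emeasure M (ball (g0 p) (3*b))"
    proof (rule emeasure_mono)
      show "(\<Union>g\<in>F. ball (g p) (a/2)) \<subseteq> ball (g0 p) (3*b)"
      proof
        fix x assume "x \<in> (\<Union>g\<in>F. ball (g p) (a/2))"
        then obtain g where g: "g \<in> F" "dist (g p) x < a/2" by auto
        have "dist (g p) p \<le> b" "dist (g0 p) p \<le> b" using nb g g0 F by auto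
        hence "dist (g0 p) x < 3*b" using g ab
          using dist_triangle[of "g0 p" x p] dist_triangle[of p x "g p"] dist_commute[of p "g p"] dist_commute[of x p]
          by linarith
        thus "x \<in> ball (g0 p) (3*b)" by simp
      qed
    qed (rule sets)
    also have "\<dots> \<le> ennreal (C (3*b) (a/2)) * m0"
      using doubling[of "a/2" "3*b" "g0 p"] ab g0 unfolding f_def by simp
    finally have le: "of_nat (card F) * m0 \<le> ennreal (C (3*b) (a/2)) * m0" .
    have "of_nat (card F) \<le> ennreal (C (3*b) (a/2))"
      using le m0pos m0fin ennreal_mult_le_mult_iff[of m0 "of_nat (card F)" "ennreal (C (3*b) (a/2))"]
      by (simp add: mult.commute)
    thus ?thesis using C0
      by (metis ennreal_le_iff ennreal_of_nat_eq_real_of_nat less_le)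
  qed
  have fin: "finite S"
  proof (rule ccontr)
    assume "infinite S"
    then obtain F where "F \<subseteq> S" "finite F" "card F = nat \<lceil>C (3 * b) (a / 2)\<rceil> + 1"
      by (meson infinite_arbitrarily_large)
    with bnd[of F] show False by linarith
  qed
  show ?thesis using fin bnd[OF order_refl fin] unfolding S_def by simp
qed

end
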